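(* Assume the Continuum Hypothesis. Then every productively Lindelöf co-analytic space which is nowhere locally compact is $\sigma$-compact.
   Context: All spaces are completely regular. A space $X$ is productively Lindelöf if $X\times Y$ is Lindelöf for every Lindelöf space $Y$. A space is analytic if it is a continuous image of the space $\mathbb{P}$ of irrationals; $X$ is co-analytic if $\beta X\setminus X$ is analytic. $X$ is nowhere locally compact if no point of $X$ has a compact neighbourhood. *)

theory Defs
  imports "HOL-Analysis.Analysis" "HOL-Library.Equipollence"
begin

definition CH :: bool where
  "CH \<longleftrightarrow> (\<forall>A :: real set. countable A \<or> A \<approx> (UNIV :: real set))"

definition tychonoff_space :: "'a topology \<Rightarrow> bool" where
  "tychonoff_space X \<longleftrightarrow> completely_regular_space X \<and> Hausdorff_space X"

text \<open>HOL cannot quantify over all types inside a formula, so Y ranges over all spaces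
  on the (very large) type (a => real) set.\<close>
definition productively_Lindelof :: "'a topology \<Rightarrow> bool" where
  "productively_Lindelof X \<longleftrightarrow>
     (\<forall>Y :: ('a \<Rightarrow> real) set topology.
        tychonoff_space Y \<and> Lindelof_space Y \<longrightarrow> Lindelof_space (prod_topology X Y))"

definition irrationals_space :: "real topology" where
  "irrationals_space = top_of_set (- \<rat>)"

definition analytic_space :: "'b topology \<Rightarrow> bool" where
  "analytic_space Z \<longleftrightarrow>
     (\<exists>g. continuous_map irrationals_space Z g \<and> g ` topspace irrationals_space = topspace Z)"

text \<open>Stone-Cech compactification, realised concretely as the closure of the evaluation
  embedding of X into the Tychonoff cube [0,1]^C(X,[0,1]).\<close>
definition cube_index :: "'a topology \<Rightarrow> ('a \<Rightarrow> real) set" where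
  "cube_index X = {f. continuous_map X (top_of_set {0..1}) f \<and> f \<in> extensional (topspace X)}"

definition tychonoff_cube :: "'a topology \<Rightarrow> (('a \<Rightarrow> real) \<Rightarrow> real) topology" where
  "tychonoff_cube X = product_topology (\<lambda>_. top_of_set {0..1}) (cube_index X)"

definition evaluation_map :: "'a topology \<Rightarrow> 'a \<Rightarrow> (('a \<Rightarrow> real) \<Rightarrow> real)" where
  "evaluation_map X x = restrict (\<lambda>f. f x) (cube_index X)"

definition stone_cech :: "'a topology \<Rightarrow> (('a \<Rightarrow> real) \<Rightarrow> real) topology" where
  "stone_cech X = subtopology (tychonoff_cube X)
      (tychonoff_cube X closure_of (evaluation_map X ` topspace X))"

definition stone_cech_remainder :: "'a topology \<Rightarrow> (('a \<Rightarrow> real) \<Rightarrow> real) topology" where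
  "stone_cech_remainder X = subtopology (stone_cech X)
      (topspace (stone_cech X) - evaluation_map X ` topspace X)"

definition co_analytic_space :: "'a topology \<Rightarrow> bool" where
  "co_analytic_space X \<longleftrightarrow> analytic_space (stone_cech_remainder X)"

definition nowhere_locally_compact :: "'a topology \<Rightarrow> bool" where
  "nowhere_locally_compact X \<longleftrightarrow>
     (\<forall>x \<in> topspace X. \<not> (\<exists>U K. openin X U \<and> compactin X K \<and> x \<in> U \<and> U \<subseteq> K))"

definition sigma_compact_space :: "'a topology \<Rightarrow> bool" where
  "sigma_compact_space X \<longleftrightarrow>
     (\<exists>\<F>. countable \<F> \<and> (\<forall>K \<in> \<F>. compactin X K) \<and> \<Union>\<F> = topspace X)"

end

theory Submission
  imports Defs
begin



lemma transfer_topology: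
  fixes T :: "'b topology" and j :: "'b \<Rightarrow> 'c"
  assumes inj: "inj_on j (topspace T)"
  shows "\<exists>T'::'c topology. T homeomorphic_space T'"
proof -
  let ?g = "inv_into (topspace T) j"
  define T' where "T' = pullback_topology (j ` topspace T) ?g T"
  have top: "topspace T' = j ` topspace T"
    using inj by (auto simp: T'_def topspace_pullback_topology)
  have "homeomorphic_maps T T' j ?g"
    unfolding homeomorphic_maps_def
  proof (intro conjI)
    show "continuous_map T T' j"
      unfolding continuous_map_def
    proof (intro conjI allI impI)
      show "j \<in> topspace T \<rightarrow> topspace T'" using top by auto
      fix U assume "openin T' U"
      then obtain W where W: "openin T W" "U = ?g -` W \<inter> j ` topspace T"
        by (auto simp: T'_def openin_pullback_topology)
      have "{x \<in> topspace T. j x \<in> U} = W"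
        using W inj openin_subset[OF W(1)] by (auto simp: inv_into_f_f dest: inj_onD)
      then show "openin T {x \<in> topspace T. j x \<in> U}" using W by simp
    qed
    show "continuous_map T' T ?g"
      unfolding continuous_map_def
    proof (intro conjI allI impI)
      show "?g \<in> topspace T' \<rightarrow> topspace T" using top by (auto simp: inv_into_into)
      fix U assume "openin T U"
      moreover have "{x \<in> topspace T'. ?g x \<in> U} = ?g -` U \<inter> j ` topspace T"
        using top by auto
      ultimately show "openin T' {x \<in> topspace T'. ?g x \<in> U}"
        by (auto simp: T'_def openin_pullback_topology)
    qed
  qed (use inj top in \<open>auto simp: inv_into_f_f f_inv_into_f\<close>)
  then show ?thesis unfolding homeomorphic_space_def by blast
qed




definition mich :: "'b::topological_space set \<Rightarrow> 'b set \<Rightarrow> 'b topology" where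
 "mich F0 A = topology (\<lambda>W. W \<subseteq> F0 \<union> A \<and> (\<forall>y\<in>W \<inter> F0. \<exists>V. open V \<and> y \<in> V \<and> V \<inter> (F0 \<union> A) \<subseteq> W))"

lemma istopology_mich:
  "istopology (\<lambda>W. W \<subseteq> F0 \<union> A \<and> (\<forall>y\<in>W \<inter> F0. \<exists>V. open V \<and> y \<in> V \<and> V \<inter> (F0 \<union> A) \<subseteq> W))"
  (is "istopology ?L")
proof -
  have 1: "?L (S \<inter> T)" if S: "?L S" and T: "?L T" for S T
  proof (intro conjI ballI)
    show "S \<inter> T \<subseteq> F0 \<union> A" using S by blast
    fix y assume y: "y \<in> S \<inter> T \<inter> F0"
    have "y \<in> S \<inter> F0" using y by blast
    then have "\<exists>V. open V \<and> y \<in> V \<and> V \<inter> (F0 \<union> A) \<subseteq> S" using S by (elim conjE) (erule bspec)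
    then obtain V1 where "open V1" "y \<in> V1" "V1 \<inter> (F0 \<union> A) \<subseteq> S" by (elim exE conjE)
    have "y \<in> T \<inter> F0" using y by blast
    then have "\<exists>V. open V \<and> y \<in> V \<and> V \<inter> (F0 \<union> A) \<subseteq> T" using T by (elim conjE) (erule bspec)
    then obtain V2 where "open V2" "y \<in> V2" "V2 \<inter> (F0 \<union> A) \<subseteq> T" by (elim exE conjE)
    show "\<exists>V. open V \<and> y \<in> V \<and> V \<inter> (F0 \<union> A) \<subseteq> S \<inter> T"
      apply (rule exI[of _ "V1 \<inter> V2"])
      using \<open>open V1\<close> \<open>open V2\<close> \<open>y \<in> V1\<close> \<open>y \<in> V2\<close> \<open>V1 \<inter> (F0 \<union> A) \<subseteq> S\<close> \<open>V2 \<inter> (F0 \<union> A) \<subseteq> T\<close>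
      by auto
  qed
  have 2: "?L (\<Union>K)" if K: "\<forall>W\<in>K. ?L W" for K
  proof (intro conjI ballI)
    show "\<Union>K \<subseteq> F0 \<union> A" using K by auto
    fix y assume "y \<in> \<Union>K \<inter> F0"
    then obtain W where W: "W \<in> K" "y \<in> W \<inter> F0" by auto
    have "\<exists>V. open V \<and> y \<in> V \<and> V \<inter> (F0 \<union> A) \<subseteq> W" using K W by auto
    then obtain V where "open V" "y \<in> V" "V \<inter> (F0 \<union> A) \<subseteq> W" by (elim exE conjE)
    then show "\<exists>V. open V \<and> y \<in> V \<and> V \<inter> (F0 \<union> A) \<subseteq> \<Union>K"
      using W by (intro exI[of _ V]) auto
  qed
  show ?thesis unfolding istopology_def
    apply (rule conjI)
     apply (intro allI impI)
     apply (rule 1; assumption)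
    apply (intro allI impI)
    apply (rule 2; assumption)
    done
qed

lemma openin_mich:
  "openin (mich F0 A) W \<longleftrightarrow> W \<subseteq> F0 \<union> A \<and> (\<forall>y\<in>W \<inter> F0. \<exists>V. open V \<and> y \<in> V \<and> V \<inter> (F0 \<union> A) \<subseteq> W)"
  unfolding mich_def by (simp add: topology_inverse'[OF istopology_mich])

lemma topspace_mich: "topspace (mich F0 A) = F0 \<union> A"
proof -
  have "openin (mich F0 A) (F0 \<union> A)"
    by (auto simp: openin_mich intro: exI[of _ UNIV])
  then show ?thesis using openin_subset openin_mich
    by (metis openin_topspace subset_antisym)
qed

lemma openin_mich_open:
  assumes "open U" shows "openin (mich F0 A) (U \<inter> (F0 \<union> A))"
  using assms by (auto simp: openin_mich)

lemma openin_mich_point: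
  assumes "a \<in> A" "a \<notin> F0" shows "openin (mich F0 A) {a}"
  using assms by (auto simp: openin_mich)

lemma continuous_map_mich:
  assumes "continuous_map (top_of_set (F0 \<union> A)) Z f"
  shows "continuous_map (mich F0 A) Z f"
  unfolding continuous_map_def topspace_mich
proof (intro conjI allI impI)
  show "f \<in> F0 \<union> A \<rightarrow> topspace Z" using assms by (simp add: continuous_map_def)
  fix U assume "openin Z U"
  then have "openin (top_of_set (F0 \<union> A)) {x \<in> F0 \<union> A. f x \<in> U}"
    using assms by (simp add: continuous_map_def)
  then obtain T where "open T" "{x \<in> F0 \<union> A. f x \<in> U} = T \<inter> (F0 \<union> A)"
    by (auto simp: openin_open)
  then show "openin (mich F0 A) {x \<in> F0 \<union> A. f x \<in> U}"
    by (metis openin_mich_open)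
qed

lemma Hausdorff_mich:
  fixes F0 :: "'b::t2_space set"
  shows "Hausdorff_space (mich F0 A)"
  unfolding Hausdorff_space_def topspace_mich
proof (intro allI impI)
  fix x y assume H: "x \<in> F0 \<union> A \<and> y \<in> F0 \<union> A \<and> x \<noteq> y"
  then have "x \<in> F0 \<union> A" "y \<in> F0 \<union> A" "x \<noteq> y" by auto
  then obtain U V where "open U" "open V" "x \<in> U" "y \<in> V" "U \<inter> V = {}"
    by (meson hausdorff)
  then show "\<exists>U V. openin (mich F0 A) U \<and> openin (mich F0 A) V \<and> x \<in> U \<and> y \<in> V \<and> disjnt U V"
    using \<open>x \<in> F0 \<union> A\<close> \<open>y \<in> F0 \<union> A\<close>
    by (intro exI[of _ "U \<inter> (F0 \<union> A)"] exI[of _ "V \<inter> (F0 \<union> A)"])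
       (auto simp: openin_mich_open disjnt_def)
qed




lemma completely_regular_mich:
  fixes F0 :: "'b::metric_space set"
  assumes "A \<inter> F0 = {}"
  shows "completely_regular_space (mich F0 A)"
  unfolding completely_regular_space_def topspace_mich
proof (intro allI impI)
  fix C y assume C: "closedin (mich F0 A) C \<and> y \<in> F0 \<union> A - C"
  then have Csub: "C \<subseteq> F0 \<union> A" and y: "y \<in> F0 \<union> A" "y \<notin> C"
    using closedin_subset topspace_mich by fastforce+
  have opn: "openin (mich F0 A) ((F0 \<union> A) - C)"
    using C closedin_def topspace_mich by metis
  show "\<exists>f::'b\<Rightarrow>real. continuous_map (mich F0 A) (top_of_set {0..1}) f \<and> f y = 0 \<and> f ` C \<subseteq> {1}"
  proof (cases "y \<in> F0")
    case True
    then have "y \<in> ((F0 \<union> A) - C) \<inter> F0" using y by simp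
    then have "\<exists>V. open V \<and> y \<in> V \<and> V \<inter> (F0 \<union> A) \<subseteq> (F0 \<union> A) - C"
      using opn unfolding openin_mich by (elim conjE) (erule bspec)
    then obtain V where V: "open V" "y \<in> V" "V \<inter> (F0 \<union> A) \<subseteq> (F0 \<union> A) - C"
      by (elim exE conjE)
    obtain e where e: "e > 0" "ball y e \<subseteq> V"
      using V open_contains_ball by metis
    define f where "f z = min 1 (dist z y / e)" for z
    have "continuous_on (F0 \<union> A) f"
      unfolding f_def by (intro continuous_intros) (use e in auto)
    moreover have "f ` (F0 \<union> A) \<subseteq> {0..1}"
      using e by (auto simp: f_def)
    ultimately have "continuous_map (mich F0 A) (top_of_set {0..1}) f"
      by (intro continuous_map_mich) (simp add: image_subset_iff)
    moreover have "f y = 0" by (simp add: f_def)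
    moreover have "f ` C \<subseteq> {1}"
    proof
      fix w assume "w \<in> f ` C"
      then obtain z where z: "z \<in> C" "w = f z" by auto
      have "z \<in> F0 \<union> A" using Csub z by auto
      then have "z \<notin> ball y e" using V e z by auto
      then have "dist z y \<ge> e" by (simp add: dist_commute)
      then show "w \<in> {1}" using z e by (simp add: f_def)
    qed
    ultimately show ?thesis by blast
  next
    case False
    define f where "f z = (if z = y then 0 else 1::real)" for z
    have "continuous_map (mich F0 A) (top_of_set {0..1}) f"
      unfolding continuous_map_def topspace_mich
    proof (intro conjI allI impI)
      show "f \<in> F0 \<union> A \<rightarrow> topspace (top_of_set {0..1})" by (auto simp: f_def)
      fix U :: "real set" assume "openin (top_of_set {0..1}) U"
      show "openin (mich F0 A) {x \<in> F0 \<union> A. f x \<in> U}"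
        unfolding openin_mich
      proof (intro conjI ballI)
        show "{x \<in> F0 \<union> A. f x \<in> U} \<subseteq> F0 \<union> A" by auto
        fix z assume z: "z \<in> {x \<in> F0 \<union> A. f x \<in> U} \<inter> F0"
        then have "z \<noteq> y" using False by auto
        then have "f z = 1" by (simp add: f_def)
        with z have "1 \<in> U" by auto
        show "\<exists>V. open V \<and> z \<in> V \<and> V \<inter> (F0 \<union> A) \<subseteq> {x \<in> F0 \<union> A. f x \<in> U}"
          using \<open>z \<noteq> y\<close> \<open>1 \<in> U\<close>
          by (intro exI[of _ "- {y}"]) (auto simp: f_def)
      qed
    qed
    moreover have "f ` C \<subseteq> {1}" using y by (auto simp: f_def)
    ultimately show ?thesis by (intro exI[where x=f] conjI) (simp_all add: f_def)
  qed
qed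




lemma Lindelof_mich:
  fixes F0 :: "'b::second_countable_topology set"
  assumes conc: "\<And>U. open U \<Longrightarrow> F0 \<subseteq> U \<Longrightarrow> countable (A - U)"
  shows "Lindelof_space (mich F0 A)"
  unfolding Lindelof_space_def topspace_mich
proof (intro allI impI)
  fix \<U> assume U: "(\<forall>U\<in>\<U>. openin (mich F0 A) U) \<and> \<Union>\<U> = F0 \<union> A"
  have "\<forall>y\<in>F0. \<exists>W V. W \<in> \<U> \<and> open V \<and> y \<in> V \<and> V \<inter> (F0 \<union> A) \<subseteq> W"
  proof
    fix y assume "y \<in> F0"
    then obtain W where "W \<in> \<U>" "y \<in> W" using U by blast
    then show "\<exists>W V. W \<in> \<U> \<and> open V \<and> y \<in> V \<and> V \<inter> (F0 \<union> A) \<subseteq> W"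
      using U \<open>y \<in> F0\<close> by (auto simp: openin_mich)
  qed
  then obtain Wf Vf where WV: "\<And>y. y \<in> F0 \<Longrightarrow> Wf y \<in> \<U> \<and> open (Vf y) \<and> y \<in> Vf y \<and> Vf y \<inter> (F0 \<union> A) \<subseteq> Wf y"
    by metis
  obtain \<V>' where V': "\<V>' \<subseteq> Vf ` F0" "countable \<V>'" "\<Union>\<V>' = \<Union>(Vf ` F0)"
    using Lindelof[of "Vf ` F0"] WV by blast
  then obtain F1 where F1: "F1 \<subseteq> F0" "countable F1" "\<V>' = Vf ` F1"
    by (meson countable_subset_image)
  define W where "W = \<Union>(Vf ` F0)"
  have "open W" using WV by (auto simp: W_def)
  moreover have "F0 \<subseteq> W" using WV by (auto simp: W_def)
  ultimately have cA: "countable (A - W)" using conc by blast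
  have "\<forall>a\<in>A - W. \<exists>U\<in>\<U>. a \<in> U" using U by blast
  then obtain Uf where Uf: "\<And>a. a \<in> A - W \<Longrightarrow> Uf a \<in> \<U> \<and> a \<in> Uf a" by metis
  show "\<exists>\<V>. countable \<V> \<and> \<V> \<subseteq> \<U> \<and> \<Union>\<V> = F0 \<union> A"
  proof (intro exI conjI)
    show "countable (Wf ` F1 \<union> Uf ` (A - W))" using F1 cA by auto
    show "Wf ` F1 \<union> Uf ` (A - W) \<subseteq> \<U>" using WV Uf F1 by blast
    show "\<Union>(Wf ` F1 \<union> Uf ` (A - W)) = F0 \<union> A"
    proof
      show "\<Union>(Wf ` F1 \<union> Uf ` (A - W)) \<subseteq> F0 \<union> A"
        using \<open>Wf ` F1 \<union> Uf ` (A - W) \<subseteq> \<U>\<close> U by blast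
      show "F0 \<union> A \<subseteq> \<Union>(Wf ` F1 \<union> Uf ` (A - W))"
      proof
        fix y assume y: "y \<in> F0 \<union> A"
        show "y \<in> \<Union>(Wf ` F1 \<union> Uf ` (A - W))"
        proof (cases "y \<in> W")
          case True
          then have "y \<in> \<Union>(Vf ` F1)" using V' F1 by (simp add: W_def)
          then obtain y1 where "y1 \<in> F1" "y \<in> Vf y1" by blast
          then have "y \<in> Wf y1" using WV F1 y by blast
          then show ?thesis using \<open>y1 \<in> F1\<close> by blast
        next
          case False
          then have "y \<in> A - W" using y \<open>F0 \<subseteq> W\<close> by blast
          then show ?thesis using Uf by blast
        qed
      qed
    qed
  qed
qed




lemma homeomorphic_Lindelof:
  assumes "X homeomorphic_space Y" "Lindelof_space X"
  shows "Lindelof_space Y"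
proof -
  obtain f where "homeomorphic_map X Y f"
    using assms(1) homeomorphic_space by blast
  then show ?thesis
    using assms(2) Lindelof_space_continuous_map_image homeomorphic_imp_continuous_map
      homeomorphic_imp_surjective_map by metis
qed

lemma prodL_transfer:
  fixes X :: "'a topology" and Y :: "'b topology" and j :: "'b \<Rightarrow> ('a \<Rightarrow> real) set"
  assumes PL: "productively_Lindelof X" and T: "tychonoff_space Y" and L: "Lindelof_space Y"
    and inj: "inj_on j (topspace Y)"
  shows "Lindelof_space (prod_topology X Y)"
proof -
  obtain Y' :: "('a \<Rightarrow> real) set topology" where H: "Y homeomorphic_space Y'"
    using transfer_topology[OF inj] by blast
  have "tychonoff_space Y'"
    using T H homeomorphic_completely_regular_space homeomorphic_Hausdorff_space
    unfolding tychonoff_space_def by blast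
  moreover have "Lindelof_space Y'" using H L homeomorphic_Lindelof by blast
  ultimately have "Lindelof_space (prod_topology X Y')"
    using PL unfolding productively_Lindelof_def by blast
  moreover have "prod_topology X Y' homeomorphic_space prod_topology X Y"
    using H homeomorphic_space_prod_topology homeomorphic_space_refl homeomorphic_space_sym by blast
  ultimately show ?thesis using homeomorphic_Lindelof by blast
qed




lemma CH_order:
  assumes "CH"
  obtains r :: "real rel" where "\<And>s t. (s,t) \<in> r \<or> (t,s) \<in> r" "\<And>t. countable {s. (s,t) \<in> r}"
proof -
  define r where "r = card_of (UNIV::real set)"
  have co: "Card_order r" unfolding r_def by (rule card_of_Card_order)
  have F: "Field r = UNIV" unfolding r_def by (rule Field_card_of)
  have wo: "Well_order r" unfolding r_def by (rule card_of_Well_order)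
  have "well_order_on UNIV r" using wo F by metis
  then have lin: "linear_order_on UNIV r" unfolding well_order_on_def by (elim conjE)
  then have tot: "total_on UNIV r" unfolding linear_order_on_def by (elim conjE)
  from lin have refl: "refl_on UNIV r" unfolding linear_order_on_def partial_order_on_def preorder_on_def by (elim conjE)
  have 1: "(s,t) \<in> r \<or> (t,s) \<in> r" for s t
  proof (cases "s = t")
    case True then show ?thesis using refl by (auto simp: refl_on_def)
  next
    case False then show ?thesis using tot by (auto simp: total_on_def)
  qed
  have 2: "countable {s. (s,t) \<in> r}" for t
  proof -
    have lt: "(card_of (underS r t), r) \<in> ordLess" apply (rule card_of_underS[OF co]) by (simp add: F)
    from assms have ch: "\<forall>A::real set. countable A \<or> A \<approx> (UNIV::real set)" by (simp add: CH_def)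
    have "countable (underS r t)"
    proof (rule ccontr)
      assume nc: "\<not> countable (underS r t)"
      have "countable (underS r t) \<or> underS r t \<approx> (UNIV::real set)" using ch by (rule spec)
      with nc have "underS r t \<approx> (UNIV::real set)" by meson
      then obtain f where "bij_betw f (underS r t) (UNIV::real set)" unfolding eqpoll_def by blast
      then have "(card_of (underS r t), card_of (UNIV::real set)) \<in> ordIso" using card_of_ordIso by blast
      moreover have r_eq: "card_of (UNIV::real set) = r" by (simp add: r_def)
      ultimately have "(card_of (underS r t), r) \<in> ordIso" by simp
      with not_ordLess_ordIso[OF lt] show False by (rule notE)
    qed
    moreover have "{s. (s,t) \<in> r} \<subseteq> insert t (underS r t)"
      unfolding underS_def by blast
    ultimately show ?thesis by (meson countable_insert countable_subset)
  qed
  show ?thesis by (rule that[OF 1 2])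
qed




lemma concentrated:
  fixes S Zc :: "'b::{second_countable_topology,t2_space} set"
  assumes ch: "CH" and cZ: "compact Zc" and SZ: "S \<subseteq> Zc"
    and nsc: "\<And>\<K>. countable \<K> \<Longrightarrow> (\<And>K. K \<in> \<K> \<Longrightarrow> compact K \<and> K \<subseteq> S) \<Longrightarrow> \<not> S \<subseteq> \<Union>\<K>"
  obtains A where "A \<subseteq> S" "uncountable A" "\<And>U. open U \<Longrightarrow> Zc - S \<subseteq> U \<Longrightarrow> countable (A - U)"
proof -
  obtain r :: "real rel" where tot: "\<And>s t. (s,t) \<in> r \<or> (t,s) \<in> r" and cnt: "\<And>t. countable {s. (s,t) \<in> r}"
    using CH_order[OF ch] by metis
  obtain B :: "'b set set" where B: "countable B" "topological_basis B"
    using ex_countable_basis by blast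
  have "B \<noteq> {}"
  proof
    assume "B = {}"
    obtain x :: 'b where "True" by simp
    obtain b where "b \<in> B" "x \<in> b" "b \<subseteq> UNIV"
      using topological_basisE[OF B(2) open_UNIV, of x] by blast
    then show False using \<open>B = {}\<close> by simp
  qed
  define bb where "bb = from_nat_into B"
  have rbb: "range bb = B" unfolding bb_def using B \<open>B \<noteq> {}\<close> by simp
  obtain phi :: "nat set \<Rightarrow> real" where phi: "bij_betw phi UNIV UNIV"
    using nat_sets_eqpoll_reals unfolding eqpoll_def by blast
  define h where "h = inv phi"
  have hphi: "h (phi N) = N" for N
    using phi unfolding h_def by (simp add: bij_betw_def)
  define Uc where "Uc t = \<Union>(bb ` h t)" for t
  have openUc: "open (Uc t)" for t
    unfolding Uc_def using rbb B(2) topological_basis_open by blast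
  define code where "code U = phi {n. bb n \<subseteq> U}" for U
  have Uc_code: "Uc (code U) = U" if oU: "open U" for U
  proof
    show "Uc (code U) \<subseteq> U" unfolding Uc_def code_def hphi by blast
    show "U \<subseteq> Uc (code U)"
    proof
      fix x assume "x \<in> U"
      then obtain b where "b \<in> B" "x \<in> b" "b \<subseteq> U"
        using topological_basisE[OF B(2) oU] by metis
      then obtain n where "bb n = b" using rbb by blast
      then show "x \<in> Uc (code U)" unfolding Uc_def code_def hphi
        using \<open>x \<in> b\<close> \<open>b \<subseteq> U\<close> by blast
    qed
  qed
  define bad where "bad t \<longleftrightarrow> Zc - S \<subseteq> Uc t" for t
  define KK where "KK t = (\<lambda>s. Zc - Uc s) ` {s. (s,t) \<in> r \<and> bad s}" for t
  have exa: "\<exists>x. x \<in> S \<and> x \<notin> \<Union>(KK t)" for t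
  proof -
    have "countable (KK t)" unfolding KK_def
      by (rule countable_image, rule countable_subset[OF _ cnt[of t]]) auto
    moreover have "compact K \<and> K \<subseteq> S" if KK: "K \<in> KK t" for K
    proof -
      obtain s where s: "K = Zc - Uc s" "bad s" using KK unfolding KK_def by blast
      have "compact K" using s cZ openUc compact_diff by metis
      moreover have "K \<subseteq> S" using s unfolding bad_def by blast
      ultimately show ?thesis by simp
    qed
    ultimately have "\<not> S \<subseteq> \<Union>(KK t)" using nsc by metis
    then show ?thesis by blast
  qed
  define a where "a t = (SOME x. x \<in> S \<and> x \<notin> \<Union>(KK t))" for t
  have a: "a t \<in> S" "a t \<notin> \<Union>(KK t)" for t
    using someI_ex[OF exa[of t]] unfolding a_def by auto
  have key: "a t \<notin> Zc - Uc s" if "(s,t) \<in> r" "bad s" for s t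
    using a(2)[of t] that unfolding KK_def by blast
  show ?thesis
  proof (rule that[of "range a"])
    show "range a \<subseteq> S" using a by blast
  next
    fix U assume U: "open U" "Zc - S \<subseteq> U"
    define t0 where "t0 = code U"
    have bt0: "bad t0" unfolding bad_def t0_def Uc_code[OF U(1)] using U by simp
    have "range a - U \<subseteq> a ` {t. (t,t0) \<in> r}"
    proof
      fix y assume y: "y \<in> range a - U"
      then obtain t where t: "y = a t" by blast
      have "(t,t0) \<in> r"
      proof (rule ccontr)
        assume "(t,t0) \<notin> r"
        then have "(t0,t) \<in> r" using tot by metis
        then have "a t \<notin> Zc - U" using key[OF _ bt0] unfolding t0_def Uc_code[OF U(1)] by blast
        then show False using a(1)[of t] SZ y t by auto
      qed
      then show "y \<in> a ` {t. (t,t0) \<in> r}" using t by blast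
    qed
    then show "countable (range a - U)"
      using countable_subset cnt countable_image by metis
  next
    show "uncountable (range a)"
    proof
      assume cA: "countable (range a)"
      define cs where "cs s = code (- {s})" for s
      define T0 where "T0 = (\<Union>s\<in>range a. {t. (t, cs s) \<in> r})"
      have "countable T0" unfolding T0_def using cA cnt by blast
      then obtain t where "t \<notin> T0"
        using uncountable_UNIV_real by (metis UNIV_eq_I)
      define s where "s = a t"
      have "s \<in> range a" unfolding s_def by blast
      then have "(t, cs s) \<notin> r" using \<open>t \<notin> T0\<close> unfolding T0_def by blast
      then have r1: "(cs s, t) \<in> r" using tot by metis
      have Ucs: "Uc (cs s) = - {s}" unfolding cs_def by (rule Uc_code) (simp add: open_Compl)
      have "s \<in> S" unfolding s_def using a by blast
      then have "bad (cs s)" unfolding bad_def Ucs by blast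
      then have "a t \<notin> Zc - Uc (cs s)" using key[OF r1] by blast
      then show False using a(1)[of t] SZ unfolding Ucs by (auto simp: s_def)
    qed
  qed
qed




lemma prod_not_Lindelof:
  fixes X :: "'a topology" and psi :: "'a \<Rightarrow> 'b::t2_space"
  assumes Haus: "Hausdorff_space X"
   and cont: "continuous_map X euclidean psi"
   and AS: "A \<subseteq> psi ` topspace X" and F0S: "F0 \<inter> psi ` topspace X = {}"
   and unc: "uncountable A"
  shows "\<not> Lindelof_space (prod_topology X (mich F0 A))"
proof
  assume L: "Lindelof_space (prod_topology X (mich F0 A))"
  have AF: "a \<notin> F0" if "a \<in> A" for a using that AS F0S by blast
  have "\<forall>a\<in>A. \<exists>x. x \<in> topspace X \<and> psi x = a" using AS by blast
  then obtain xa where xa: "\<And>a. a \<in> A \<Longrightarrow> xa a \<in> topspace X \<and> psi (xa a) = a" by metis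
  define D where "D = (\<lambda>a. (xa a, a)) ` A"
  define P where "P = prod_topology X (mich F0 A)"
  have tP: "topspace P = topspace X \<times> (F0 \<union> A)" unfolding P_def by (simp add: topspace_mich)
  have DP: "D \<subseteq> topspace P" unfolding tP D_def using xa by auto
  have openD: "openin P (topspace P - D)"
  proof (subst openin_subopen, intro ballI)
    fix z assume z: "z \<in> topspace P - D"
    obtain x y where xy: "z = (x,y)" by (cases z)
    have x: "x \<in> topspace X" and y: "y \<in> F0 \<union> A" using z xy tP by auto
    show "\<exists>T. openin P T \<and> z \<in> T \<and> T \<subseteq> topspace P - D"
    proof (cases "y \<in> A")
      case True
      have ne: "x \<noteq> xa y" using z xy True unfolding D_def by auto
      define T where "T = (topspace X - {xa y}) \<times> {y}"
      have "closedin X {xa y}" using closedin_Hausdorff_singleton[OF Haus] xa True by blast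
      then have "openin X (topspace X - {xa y})" by (simp add: closedin_def)
      moreover have "openin (mich F0 A) {y}" using openin_mich_point True AF by blast
      ultimately have "openin P T" unfolding P_def T_def by (simp add: openin_prod_Times_iff)
      moreover have "z \<in> T" using xy x ne unfolding T_def by auto
      moreover have "T \<subseteq> topspace P - D"
      proof
        fix w assume w: "w \<in> T"
        then have "w \<in> topspace P" unfolding T_def tP using True by auto
        moreover have "w \<notin> D"
        proof
          assume "w \<in> D"
          then obtain b where "b \<in> A" "w = (xa b, b)" unfolding D_def by blast
          then show False using w unfolding T_def by auto
        qed
        ultimately show "w \<in> topspace P - D" by blast
      qed
      ultimately show ?thesis by blast
    next
      case False
      then have yF: "y \<in> F0" using y by blast
      have "psi x \<in> psi ` topspace X" using x by (rule imageI)
      then have "psi x \<noteq> y" using F0S yF by auto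
      then have "\<exists>U V. open U \<and> open V \<and> psi x \<in> U \<and> y \<in> V \<and> U \<inter> V = {}"
        by (rule hausdorff)
      then obtain U1 U2 where U: "open U1" "open U2" "psi x \<in> U1" "y \<in> U2" "U1 \<inter> U2 = {}"
        by (elim exE conjE)
      define T where "T = {x' \<in> topspace X. psi x' \<in> U1} \<times> (U2 \<inter> (F0 \<union> A))"
      have "openin X {x' \<in> topspace X. psi x' \<in> U1}"
        by (rule openin_continuous_map_preimage[OF cont]) (metis U(1) open_openin)
      moreover have "openin (mich F0 A) (U2 \<inter> (F0 \<union> A))" using openin_mich_open U(2) by blast
      ultimately have "openin P T" unfolding P_def T_def by (simp add: openin_prod_Times_iff)
      moreover have "z \<in> T" using xy x y U unfolding T_def by auto
      moreover have "T \<subseteq> topspace P - D"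
      proof
        fix w assume w: "w \<in> T"
        then have "w \<in> topspace P" unfolding T_def tP by auto
        moreover have "w \<notin> D"
        proof
          assume "w \<in> D"
          then obtain b where b: "b \<in> A" "w = (xa b, b)" unfolding D_def by blast
          then have "psi (xa b) \<in> U1" "b \<in> U2" using w unfolding T_def by auto
          then show False using xa[OF b(1)] U(5) by auto
        qed
        ultimately show "w \<in> topspace P - D" by blast
      qed
      ultimately show ?thesis by blast
    qed
  qed
  define \<U> where "\<U> = insert (topspace P - D) ((\<lambda>a. topspace X \<times> {a}) ` A)"
  have "\<forall>U\<in>\<U>. openin P U"
  proof
    fix U assume "U \<in> \<U>"
    then show "openin P U"
    proof (cases "U = topspace P - D")
      case True then show ?thesis using openD by simp
    next
      case False
      then obtain a where a: "a \<in> A" "U = topspace X \<times> {a}" using \<open>U \<in> \<U>\<close> unfolding \<U>_def by blast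
      have "openin (mich F0 A) {a}" using openin_mich_point a AF by blast
      then show ?thesis unfolding a(2) P_def by (simp add: openin_prod_Times_iff)
    qed
  qed
  moreover have "\<Union>\<U> = topspace P"
  proof
    show "\<Union>\<U> \<subseteq> topspace P" unfolding \<U>_def tP by auto
    show "topspace P \<subseteq> \<Union>\<U>"
    proof
      fix z assume z: "z \<in> topspace P"
      show "z \<in> \<Union>\<U>"
      proof (cases "z \<in> D")
        case True
        then obtain a where a: "a \<in> A" "z = (xa a, a)" unfolding D_def by blast
        then have "z \<in> topspace X \<times> {a}" using xa by auto
        then show ?thesis using a unfolding \<U>_def by blast
      next
        case False then show ?thesis using z unfolding \<U>_def by blast
      qed
    qed
  qed
  ultimately obtain \<V> where V: "countable \<V>" "\<V> \<subseteq> \<U>" "\<Union>\<V> = topspace P"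
    using L unfolding Lindelof_space_def P_def by metis
  have sub: "(\<lambda>a. topspace X \<times> {a}) ` A \<subseteq> \<V>"
  proof
    fix W assume "W \<in> (\<lambda>a. topspace X \<times> {a}) ` A"
    then obtain a where a: "a \<in> A" "W = topspace X \<times> {a}" by blast
    have "(xa a, a) \<in> topspace P" using DP a unfolding D_def by blast
    then obtain V0 where V0: "V0 \<in> \<V>" "(xa a, a) \<in> V0" using V(3) by blast
    then have "V0 \<in> \<U>" using V(2) by blast
    moreover have "(xa a, a) \<in> D" unfolding D_def using a by blast
    ultimately obtain b where b: "b \<in> A" "V0 = topspace X \<times> {b}"
      using V0 unfolding \<U>_def by blast
    then have "b = a" using V0 by auto
    then show "W \<in> \<V>" using V0 b a by simp
  qed
  have "countable ((\<lambda>a. topspace X \<times> {a}) ` A)" using countable_subset[OF sub V(1)] .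
  moreover have "inj_on (\<lambda>a. topspace X \<times> {a}) A"
  proof (rule inj_onI)
    fix a b assume ab: "a \<in> A" "b \<in> A" "topspace X \<times> {a} = topspace X \<times> {b}"
    have "(xa a, a) \<in> topspace X \<times> {a}" using xa ab by auto
    then show "a = b" using ab by auto
  qed
  ultimately have "countable A" by (rule countable_image_inj_on)
  then show False using unc by simp
qed




lemma cube_index_alt:
  "mspace (submetric (cfunspace X euclidean_metric) {f. f \<in> topspace X \<rightarrow> {0..1::real}}) = cube_index X"
proof -
  have "f \<in> mspace (submetric (cfunspace X euclidean_metric) {f. f \<in> topspace X \<rightarrow> {0..1::real}})
        \<longleftrightarrow> f \<in> cube_index X" for f
  proof -
    have b: "bounded (f ` topspace X)" if "f \<in> topspace X \<rightarrow> {0..1::real}"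
    proof (rule bounded_subset[OF bounded_closed_interval[of 0 1]])
      show "f ` topspace X \<subseteq> {0..1}" using that by auto
    qed
    show ?thesis
      unfolding cube_index_def using b
      by (auto simp: continuous_map_in_subtopology Pi_iff image_subset_iff)
  qed
  then show ?thesis by blast
qed

lemma tychonoff_embedding:
  assumes "tychonoff_space X"
  shows "embedding_map X (tychonoff_cube X) (evaluation_map X)"
proof -
  have "completely_regular_space X" "Hausdorff_space X"
    using assms unfolding tychonoff_space_def by auto
  from completely_regular_space_cube_embedding_explicit[OF this]
  show ?thesis
    unfolding cube_index_alt tychonoff_cube_def evaluation_map_def .
qed

lemma second_countable_euclidean:
  "second_countable (euclidean :: 'b::second_countable_topology topology)"
proof -
  obtain B :: "'b set set" where B: "countable B" "topological_basis B"
    using ex_countable_basis by blast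
  show ?thesis
    unfolding second_countable_def
  proof (intro exI[of _ B] conjI ballI allI impI)
    show "countable B" by (rule B(1))
    fix V assume "V \<in> B"
    then show "openin euclidean V" using B(2) topological_basis_open by auto
  next
    fix U :: "'b set" and x assume "openin euclidean U \<and> x \<in> U"
    then have "open U" "x \<in> U" by auto
    then show "\<exists>V\<in>B. x \<in> V \<and> V \<subseteq> U" using topological_basisE[OF B(2)] by metis
  qed
qed

lemma irrationals_props:
  "tychonoff_space irrationals_space" "Lindelof_space irrationals_space"
  "topspace irrationals_space = - \<rat>" "- (\<rat>::real set) \<noteq> {}"
proof -
  show "tychonoff_space irrationals_space"
    unfolding tychonoff_space_def irrationals_space_def
    by (simp add: completely_regular_space_subtopology metrizable_imp_completely_regular_space
        metrizable_space_euclidean Hausdorff_space_subtopology)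
  show "Lindelof_space irrationals_space"
    unfolding irrationals_space_def
    by (intro second_countable_imp_Lindelof_space second_countable_subtopology second_countable_euclidean)
  show "topspace irrationals_space = - \<rat>" unfolding irrationals_space_def by simp
  show "- (\<rat>::real set) \<noteq> {}"
  proof
    assume "- \<rat> = ({} :: real set)"
    then have "(UNIV :: real set) = \<rat>" by blast
    then show False using uncountable_UNIV_real countable_rat by metis
  qed
qed




theorem theorem2p4:
  fixes X :: "'a topology"
  assumes "CH"
    and "tychonoff_space X"
    and "productively_Lindelof X"
    and "co_analytic_space X"
    and "nowhere_locally_compact X"
  shows "sigma_compact_space X"
proof (rule ccontr)
  assume nsig: "\<not> sigma_compact_space X"
  have Haus: "Hausdorff_space X" using assms(2) unfolding tychonoff_space_def by simp
  have Xne: "topspace X \<noteq> {}"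
  proof
    assume "topspace X = {}"
    then have "sigma_compact_space X" unfolding sigma_compact_space_def
      by (intro exI[of _ "{}"]) simp
    then show False using nsig by simp
  qed
  define CI where "CI = cube_index X"
  define e where "e = evaluation_map X"
  define Cube where "Cube = tychonoff_cube X"
  have emb: "embedding_map X Cube e"
    unfolding Cube_def e_def by (rule tychonoff_embedding[OF assms(2)])
  have topCube: "topspace Cube = PiE CI (\<lambda>_. {0..1})"
    unfolding Cube_def tychonoff_cube_def CI_def by simp
  have CIc: "continuous_map X euclideanreal f" "\<And>x. x \<in> topspace X \<Longrightarrow> f x \<in> {0..1}" if "f \<in> CI" for f
    using that unfolding CI_def cube_index_def
    by (auto simp: continuous_map_in_subtopology)
  have eval: "e x f = f x" if "f \<in> CI" for x f
    using that unfolding e_def evaluation_map_def CI_def by simp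
  have eX: "e ` topspace X \<subseteq> topspace Cube"
  proof
    fix z assume "z \<in> e ` topspace X"
    then obtain x where x: "x \<in> topspace X" "z = e x" by blast
    show "z \<in> topspace Cube" unfolding topCube x(2)
      using CIc(2)[OF _ x(1)] eval unfolding e_def evaluation_map_def CI_def
      by (auto simp: PiE_iff)
  qed
  define SC where "SC = stone_cech X"
  have SC_eq: "SC = subtopology Cube (Cube closure_of (e ` topspace X))"
    unfolding SC_def stone_cech_def Cube_def e_def ..
  have topSC: "topspace SC = Cube closure_of (e ` topspace X)"
    unfolding SC_eq by (simp add: closure_of_subset_topspace inf.absorb2)
  define R where "R = stone_cech_remainder X"
  have R_eq: "R = subtopology SC (topspace SC - e ` topspace X)"
    unfolding R_def stone_cech_remainder_def SC_def e_def ..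
  have topR: "topspace R = topspace SC - e ` topspace X"
    unfolding R_eq by auto
  obtain g where g: "continuous_map irrationals_space R g" "g ` (- \<rat>) = topspace R"
    using assms(4) irrationals_props(3) unfolding co_analytic_space_def analytic_space_def R_def by metis
  define P where "P = prod_topology X irrationals_space"
  have topP: "topspace P = topspace X \<times> (- \<rat>)"
    unfolding P_def by (simp add: irrationals_props(3))
  have LP: "Lindelof_space P"
  proof -
    have "inj_on (\<lambda>r::real. {\<lambda>_::'a. r}) (topspace irrationals_space)"
      by (rule inj_onI) (metis singleton_inject)
    then show ?thesis unfolding P_def
      using prodL_transfer[OF assms(3) irrationals_props(1) irrationals_props(2)] by blast
  qed
  have gR: "g p \<in> topspace SC" "g p \<notin> e ` topspace X" if "p \<in> - \<rat>" for p
    using g(2) that topR by auto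
  have SCsub: "topspace SC \<subseteq> topspace Cube" unfolding topSC by (rule closure_of_subset_topspace)
  have contgf: "continuous_map irrationals_space euclideanreal (\<lambda>p. g p f)" if "f \<in> CI" for f
  proof -
    have "continuous_map Cube euclideanreal (\<lambda>z. z f)"
      unfolding Cube_def tychonoff_cube_def
      using continuous_map_product_projection[of f "cube_index X" "\<lambda>_. top_of_set {0..1::real}"] that
      unfolding CI_def by (simp add: continuous_map_in_subtopology)
    then have "continuous_map R euclideanreal (\<lambda>z. z f)"
      unfolding R_eq SC_eq by (simp add: continuous_map_from_subtopology)
    then show ?thesis using continuous_map_compose[OF g(1)] by (simp add: o_def)
  qed
  define Wd where "Wd = (\<lambda>(f::'a \<Rightarrow> real, q::real, b::bool).
      {z \<in> topspace P. if b then f (fst z) < q \<and> q < g (snd z) f else g (snd z) f < q \<and> q < f (fst z)})"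
  define J where "J = CI \<times> (UNIV :: real set) \<times> (UNIV :: bool set)"
  have openWd: "openin P (Wd j)" if "j \<in> J" for j
  proof -
    obtain f q b where j: "j = (f, q, b)" by (cases j)
    have f: "f \<in> CI" using that j J_def by simp
    have c1: "continuous_map P euclideanreal (\<lambda>z. f (fst z))"
      unfolding P_def using continuous_map_compose[OF continuous_map_fst CIc(1)[OF f]] by (simp add: o_def)
    have c2: "continuous_map P euclideanreal (\<lambda>z. g (snd z) f)"
      unfolding P_def using continuous_map_compose[OF continuous_map_snd contgf[OF f]] by (simp add: o_def)
    have o1: "openin P {z \<in> topspace P. f (fst z) \<in> {..<q}}"
      "openin P {z \<in> topspace P. f (fst z) \<in> {q<..}}"
      by (rule openin_continuous_map_preimage[OF c1], simp)+
    have o2: "openin P {z \<in> topspace P. g (snd z) f \<in> {..<q}}"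
      "openin P {z \<in> topspace P. g (snd z) f \<in> {q<..}}"
      by (rule openin_continuous_map_preimage[OF c2], simp)+
    show ?thesis
    proof (cases b)
      case True
      have "Wd j = {z \<in> topspace P. f (fst z) \<in> {..<q}} \<inter> {z \<in> topspace P. g (snd z) f \<in> {q<..}}"
        unfolding Wd_def j using True by auto
      then show ?thesis using o1 o2 by (simp add: openin_Int)
    next
      case False
      have "Wd j = {z \<in> topspace P. g (snd z) f \<in> {..<q}} \<inter> {z \<in> topspace P. f (fst z) \<in> {q<..}}"
        unfolding Wd_def j using False by auto
      then show ?thesis using o1 o2 by (simp add: openin_Int)
    qed
  qed
  have coverWd: "\<Union>(Wd ` J) = topspace P"
  proof
    show "\<Union>(Wd ` J) \<subseteq> topspace P" unfolding Wd_def by auto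
    show "topspace P \<subseteq> \<Union>(Wd ` J)"
    proof
      fix z assume z: "z \<in> topspace P"
      obtain x p where xp: "z = (x, p)" by (cases z)
      have x: "x \<in> topspace X" and p: "p \<in> - \<rat>" using z xp topP by auto
      have "g p \<noteq> e x" using gR[OF p] x by blast
      moreover have "g p \<in> PiE CI (\<lambda>_. {0..1})" using gR(1)[OF p] SCsub topCube by blast
      moreover have "e x \<in> PiE CI (\<lambda>_. {0..1})" using eX x topCube by blast
      ultimately obtain f where f: "f \<in> CI" "g p f \<noteq> e x f"
        by (metis PiE_ext)
      then have ne: "g p f \<noteq> f x" using eval by simp
      show "z \<in> \<Union>(Wd ` J)"
      proof (cases "f x < g p f")
        case True
        then obtain q where q: "f x < q" "q < g p f" using dense by blast
        then have "z \<in> Wd (f, q, True)" unfolding Wd_def using z xp by simp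
        moreover have "(f, q, True) \<in> J" using f unfolding J_def by simp
        ultimately show ?thesis by blast
      next
        case False
        then have "g p f < f x" using ne by simp
        then obtain q where q: "g p f < q" "q < f x" using dense by blast
        then have "z \<in> Wd (f, q, False)" unfolding Wd_def using z xp by simp
        moreover have "(f, q, False) \<in> J" using f unfolding J_def by simp
        ultimately show ?thesis by blast
      qed
    qed
  qed
  obtain \<V> where V: "countable \<V>" "\<V> \<subseteq> Wd ` J" "\<Union>\<V> = topspace P"
    using LP openWd coverWd unfolding Lindelof_space_def by (metis (no_types, lifting) imageE)
  obtain J' where J': "J' \<subseteq> J" "countable J'" "\<V> = Wd ` J'"
    using V(1,2) countable_subset_image by metis
  define F where "F = fst ` J'"
  have Fc: "countable F" "F \<subseteq> CI" unfolding F_def using J' J_def by auto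
  have sep: "\<exists>f\<in>F. f x \<noteq> g p f" if x: "x \<in> topspace X" and p: "p \<in> - \<rat>" for x p
  proof -
    have "(x, p) \<in> topspace P" using x p topP by simp
    then obtain j where j: "j \<in> J'" "(x, p) \<in> Wd j" using V(3) J'(3) by blast
    obtain f q b where fqb: "j = (f, q, b)" by (cases j)
    have "f \<in> F" unfolding F_def using j(1) fqb by force
    moreover have "f x \<noteq> g p f" using j(2) fqb unfolding Wd_def by (cases b) auto
    ultimately show ?thesis by blast
  qed
  have Fne: "F \<noteq> {}"
  proof -
    obtain x where "x \<in> topspace X" using Xne by blast
    moreover obtain p :: real where "p \<in> - \<rat>" using irrationals_props(4) by blast
    ultimately show ?thesis using sep by blast
  qed
  define fn where "fn = from_nat_into F"
  have rfn: "range fn = F" unfolding fn_def using Fne Fc by simp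
  have fnCI: "fn n \<in> CI" for n using rfn Fc by blast
  define psi where "psi x = (\<lambda>n. fn n x)" for x
  define Psi where "Psi z = (\<lambda>n. z (fn n))" for z :: "('a \<Rightarrow> real) \<Rightarrow> real"
  define Zc where "Zc = PiE (UNIV::nat set) (\<lambda>_. {0..1::real})"
  define S where "S = psi ` topspace X"
  have cZ: "compact Zc"
  proof -
    have "compactin (product_topology (\<lambda>_. euclidean) UNIV) Zc"
      unfolding Zc_def compactin_PiE by simp
    then show ?thesis by (simp add: euclidean_product_topology)
  qed
  have SZ: "S \<subseteq> Zc" unfolding S_def Zc_def psi_def using CIc(2)[OF fnCI] by auto
  have cpsi: "continuous_map X euclidean psi"
  proof -
    have "continuous_map X (product_topology (\<lambda>_. euclideanreal) UNIV) psi"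
      unfolding continuous_map_componentwise_UNIV psi_def using CIc(1)[OF fnCI] by simp
    then show ?thesis by (simp add: euclidean_product_topology)
  qed
  have cPsi: "continuous_map Cube euclidean Psi"
  proof -
    have "continuous_map Cube (product_topology (\<lambda>_. euclideanreal) UNIV) Psi"
      unfolding continuous_map_componentwise_UNIV Psi_def
    proof
      fix n
      show "continuous_map Cube euclideanreal (\<lambda>x. x (fn n))"
        unfolding Cube_def tychonoff_cube_def
        using continuous_map_product_projection[of "fn n" "cube_index X" "\<lambda>_. top_of_set {0..1::real}"] fnCI[of n]
        unfolding CI_def by (simp add: continuous_map_in_subtopology)
    qed
    then show ?thesis by (simp add: euclidean_product_topology)
  qed
  have Psie: "Psi (e x) = psi x" for x
    unfolding Psi_def psi_def using eval[OF fnCI] by simp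
  have compSC: "compact_space SC"
  proof -
    have "compact_space Cube"
      unfolding Cube_def tychonoff_cube_def
      by (simp add: compact_space_product_topology compact_space_subtopology)
    then have "compactin Cube (Cube closure_of (e ` topspace X))"
      by (simp add: closedin_compact_space)
    then show ?thesis unfolding SC_eq by (rule compact_space_subtopology)
  qed
  have perfect: "compactin X {x \<in> topspace X. psi x \<in> K}" if K: "compact K" "K \<subseteq> S" for K
  proof -
    define C where "C = {z \<in> topspace SC. Psi z \<in> K}"
    have "closedin SC C"
    proof -
      have "continuous_map SC euclidean Psi" unfolding SC_eq
        using cPsi by (simp add: continuous_map_from_subtopology)
      moreover have "closedin euclidean K" using K(1) compact_imp_closed closed_closedin by blast
      ultimately show ?thesis unfolding C_def by (rule closedin_continuous_map_preimage)
    qed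
    then have "compactin SC C" using compSC closedin_compact_space by blast
    then have cC: "compactin Cube C" unfolding SC_eq by (simp add: compactin_subtopology)
    define Kx where "Kx = {x \<in> topspace X. psi x \<in> K}"
    have CKx: "C = e ` Kx"
    proof
      show "e ` Kx \<subseteq> C"
      proof
        fix z assume "z \<in> e ` Kx"
        then obtain x where x: "x \<in> topspace X" "psi x \<in> K" "z = e x" unfolding Kx_def by blast
        have "e x \<in> topspace SC" unfolding topSC using closure_of_subset[OF eX] x by blast
        then show "z \<in> C" unfolding C_def using x Psie by simp
      qed
      show "C \<subseteq> e ` Kx"
      proof
        fix z assume z: "z \<in> C"
        have "z \<in> e ` topspace X"
        proof (rule ccontr)
          assume "z \<notin> e ` topspace X"
          then have "z \<in> topspace R" using z topR unfolding C_def by blast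
          then obtain p where p: "p \<in> - \<rat>" "z = g p" using g(2) by blast
          have "Psi z \<in> S" using z K(2) unfolding C_def by blast
          then obtain x where x: "x \<in> topspace X" "Psi z = psi x" unfolding S_def by blast
          obtain f where f: "f \<in> F" "f x \<noteq> g p f" using sep[OF x(1) p(1)] by blast
          obtain n where "f = fn n" using f(1) rfn by blast
          then have "Psi z n \<noteq> psi x n" using f(2) p(2) unfolding Psi_def psi_def by simp
          then show False using x(2) by simp
        qed
        then obtain x where x: "x \<in> topspace X" "z = e x" by blast
        then have "psi x \<in> K" using z Psie unfolding C_def by simp
        then show "z \<in> e ` Kx" using x unfolding Kx_def by blast
      qed
    qed
    have "compactin (subtopology Cube (e ` topspace X)) (e ` Kx)"
      using cC CKx by (simp add: compactin_subtopology Kx_def image_mono)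
    moreover have "homeomorphic_map X (subtopology Cube (e ` topspace X)) e"
      using emb unfolding embedding_map_def .
    ultimately have "compactin X Kx"
      using homeomorphic_map_compactness[of X _ e Kx] unfolding Kx_def by blast
    then show ?thesis unfolding Kx_def .
  qed
  have nsc: "\<not> S \<subseteq> \<Union>\<K>" if "countable \<K>" "\<And>K. K \<in> \<K> \<Longrightarrow> compact K \<and> K \<subseteq> S" for \<K>
  proof
    assume SK: "S \<subseteq> \<Union>\<K>"
    define \<F> where "\<F> = (\<lambda>K. {x \<in> topspace X. psi x \<in> K}) ` \<K>"
    have "countable \<F>" unfolding \<F>_def using that(1) by simp
    moreover have "\<forall>K\<in>\<F>. compactin X K" unfolding \<F>_def using perfect that(2) by blast
    moreover have "\<Union>\<F> = topspace X"
    proof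
      show "\<Union>\<F> \<subseteq> topspace X" unfolding \<F>_def by blast
      show "topspace X \<subseteq> \<Union>\<F>"
      proof
        fix x assume x: "x \<in> topspace X"
        then have "psi x \<in> S" unfolding S_def by blast
        then obtain K where "K \<in> \<K>" "psi x \<in> K" using SK by blast
        then show "x \<in> \<Union>\<F>" unfolding \<F>_def using x by blast
      qed
    qed
    ultimately have "sigma_compact_space X" unfolding sigma_compact_space_def by blast
    then show False using nsig by simp
  qed
  obtain A where A: "A \<subseteq> S" "uncountable A" "\<And>U. open U \<Longrightarrow> Zc - S \<subseteq> U \<Longrightarrow> countable (A - U)"
    using concentrated[OF assms(1) cZ SZ nsc] by metis
  define Y where "Y = mich (Zc - S) A"
  have AF: "A \<inter> (Zc - S) = {}" using A(1) by blast
  have LY: "Lindelof_space Y" unfolding Y_def by (rule Lindelof_mich) (rule A(3))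
  have TY: "tychonoff_space Y" unfolding Y_def tychonoff_space_def
    using completely_regular_mich[OF AF] Hausdorff_mich by blast
  define j where "j z = range (\<lambda>n. (\<lambda>_::'a. real n + z n / 2))" for z :: "nat \<Rightarrow> real"
  have injj: "inj_on j (topspace Y)"
  proof (rule inj_onI)
    fix z w assume z: "z \<in> topspace Y" and w: "w \<in> topspace Y" and jzw: "j z = j w"
    have zZ: "z \<in> Zc" and wZ: "w \<in> Zc" using z w A(1) SZ unfolding Y_def topspace_mich by auto
    show "z = w"
    proof
      fix n
      have "(\<lambda>_::'a. real n + z n / 2) \<in> j w" using jzw unfolding j_def by blast
      then obtain m where m: "(\<lambda>_::'a. real n + z n / 2) = (\<lambda>_::'a. real m + w m / 2)"
        unfolding j_def by blast
      then have eq: "real n + z n / 2 = real m + w m / 2" by meson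
      have bz: "0 \<le> z n" "z n \<le> 1" using zZ unfolding Zc_def by auto
      have bw: "0 \<le> w m" "w m \<le> 1" using wZ unfolding Zc_def by auto
      have "n = m"
      proof (rule ccontr)
        assume "n \<noteq> m"
        then consider "n < m" | "m < n" by linarith
        then show False
        proof cases
          case 1
          then have "real n + 1 \<le> real m" by linarith
          then show False using eq bz bw by linarith
        next
          case 2
          then have "real m + 1 \<le> real n" by linarith
          then show False using eq bz bw by linarith
        qed
      qed
      then show "z n = w n" using eq by simp
    qed
  qed
  have "Lindelof_space (prod_topology X Y)"
    using prodL_transfer[OF assms(3) TY LY injj] .
  moreover have "\<not> Lindelof_space (prod_topology X Y)"
    unfolding Y_def
  proof (rule prod_not_Lindelof[OF Haus cpsi])
    show "A \<subseteq> psi ` topspace X" using A(1) unfolding S_def .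
    show "(Zc - S) \<inter> psi ` topspace X = {}" unfolding S_def by blast
    show "uncountable A" by (rule A(2))
  qed
  ultimately show False by simp
qed

end
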